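(* Let $p$ be a prime, let $i>j\ge1$ be integers with $i$ coprime to $p$, let $u=t+u_it^{pi+1}$ and let $v=t+v_{pj}t^{pj}+\dots\in S$ (i.e. $v\equiv t+v_{pj}t^{pj}\pmod{t^{pj+1}}$), where $u_i,v_{pj}\in\mathbb F_p$ and $u_iv_{pj}\neq0$. Write $[v,u]=t+\sum_{k\ge2}\alpha_kt^k$. Then the smallest $k\equiv1\pmod p$ with $\alpha_k\neq0$ is $k=p(pj+i-1)+1$, and $\alpha_{p(pj+i-1)+1}=-i\,u_iv_{pj}$.
   Context: $S$ denotes the group, under substitution $(f\circ g)(t)=f(g(t))$, of all power series $t+\sum_{k\ge1}(a_{pk}t^{pk}+a_{pk+1}t^{pk+1})$ with coefficients in $\mathbb F_p$. The commutator is $[v,u]=v\circ u\circ v^{-1}\circ u^{-1}$. *)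

theory Defs
  imports "HOL-Computational_Algebra.Computational_Algebra"
begin

definition S_set :: "nat \<Rightarrow> 'a::field fps set" where
  "S_set p = {f. f $ 0 = 0 \<and> f $ 1 = 1 \<and>
      (\<forall>n\<ge>2. n mod p \<noteq> 0 \<and> n mod p \<noteq> 1 \<longrightarrow> f $ n = 0)}"

definition fps_comm :: "'a::field fps \<Rightarrow> 'a fps \<Rightarrow> 'a fps" where
  "fps_comm v u = v oo u oo fps_inv v oo fps_inv u"

end

theory Submission
  imports Defs
begin


lemma Xdvd_iff: "fps_X ^ k dvd (h :: 'a::comm_ring_1 fps) \<longleftrightarrow> (\<forall>n<k. h $ n = 0)"
proof
  assume "fps_X ^ k dvd h"
  then obtain g where "h = fps_X ^ k * g" by (auto elim: dvdE)
  then show "\<forall>n<k. h $ n = 0" by (simp add: fps_X_power_mult_nth)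
next
  assume H: "\<forall>n<k. h $ n = 0"
  have "h = fps_X ^ k * fps_shift k h"
    by (rule fps_ext) (use H in \<open>simp add: fps_X_power_mult_nth\<close>)
  then show "fps_X ^ k dvd h" by (metis dvd_triv_left)
qed

lemma Xdvd_nth: "fps_X ^ k dvd (h :: 'a::comm_ring_1 fps) \<Longrightarrow> n < k \<Longrightarrow> h $ n = 0"
  using Xdvd_iff by blast

lemma Xdvd_mono: "fps_X ^ k dvd (h :: 'a::comm_ring_1 fps) \<Longrightarrow> m \<le> k \<Longrightarrow> fps_X ^ m dvd h"
  by (meson dvd_trans le_imp_power_dvd)

lemma X_dvd0: "(h :: 'a::comm_ring_1 fps) $ 0 = 0 \<Longrightarrow> fps_X dvd h"
  using Xdvd_iff[of 1 h] by simp

lemma lead_mult: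
  fixes A B :: "'a::comm_ring_1 fps"
  assumes "fps_X ^ a dvd A" "fps_X ^ b dvd B"
  shows "fps_X ^ (a + b) dvd A * B" "(A * B) $ (a + b) = A $ a * B $ b"
proof -
  obtain A1 where A: "A = fps_X ^ a * A1" using assms(1) by (auto elim: dvdE)
  obtain B1 where B: "B = fps_X ^ b * B1" using assms(2) by (auto elim: dvdE)
  have AB: "A * B = fps_X ^ (a + b) * (A1 * B1)" by (simp add: A B power_add mult_ac)
  show "fps_X ^ (a + b) dvd A * B" by (simp add: AB)
  have 1: "(A * B) $ (a + b) = (A1 * B1) $ 0" unfolding AB by (simp add: fps_X_power_mult_nth)
  have 2: "A $ a = A1 $ 0" "B $ b = B1 $ 0" by (simp_all add: A B fps_X_power_mult_nth)
  show "(A * B) $ (a + b) = A $ a * B $ b" by (simp add: 1 2)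
qed

lemma lead_power:
  fixes A :: "'a::comm_ring_1 fps"
  assumes "fps_X ^ a dvd A"
  shows "fps_X ^ (a * m) dvd A ^ m" "(A ^ m) $ (a * m) = (A $ a) ^ m"
proof -
  have "fps_X ^ (a * m) dvd A ^ m \<and> (A ^ m) $ (a * m) = (A $ a) ^ m"
  proof (induction m)
    case 0 then show ?case by simp
  next
    case (Suc m)
    then have "fps_X ^ (a + a * m) dvd A * A ^ m \<and> (A * A ^ m) $ (a + a*m) = A $ a * (A ^ m) $ (a * m)"
      using lead_mult[OF assms, of "a*m" "A^m"] by blast
    then show ?case using Suc by simp
  qed
  then show "fps_X ^ (a * m) dvd A ^ m" "(A ^ m) $ (a * m) = (A $ a) ^ m" by auto
qed

lemma comp_dvd:
  fixes r g :: "'a::idom fps"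
  assumes "fps_X ^ k dvd r" "g $ 0 = 0"
  shows "fps_X ^ k dvd (r oo g)"
proof -
  obtain s where r: "r = fps_X ^ k * s" using assms(1) by (auto elim: dvdE)
  have "r oo g = g ^ k * (s oo g)"
    using assms(2) by (simp add: r fps_compose_mult_distrib fps_compose_power[symmetric])
  moreover have "fps_X ^ k dvd g ^ k" using X_dvd0[OF assms(2)] by (simp add: dvd_power_same)
  ultimately show ?thesis by simp
qed

lemma pow_diff_dvd:
  fixes g h :: "'a::comm_ring_1 fps"
  assumes "fps_X ^ m dvd (g - h)" "fps_X ^ c dvd g" "fps_X ^ c dvd h" "k \<ge> 1"
  shows "fps_X ^ (m + c * (k - 1)) dvd (g ^ k - h ^ k)"
proof -
  have "g ^ k - h ^ k = (g - h) * (\<Sum>l<k. h ^ (k - Suc l) * g ^ l)"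
    by (rule power_diff_sumr2)
  moreover have "fps_X ^ (c * (k - 1)) dvd (\<Sum>l<k. h ^ (k - Suc l) * g ^ l)"
  proof (rule dvd_sum)
    fix l assume "l \<in> {..<k}"
    then have "k - 1 = (k - Suc l) + l" by auto
    then have e: "c * (k - 1) = c * (k - Suc l) + c * l" by (metis add_mult_distrib2)
    have "fps_X ^ (c * (k - Suc l)) dvd h ^ (k - Suc l)" using lead_power(1)[OF assms(3)] .
    moreover have "fps_X ^ (c * l) dvd g ^ l" using lead_power(1)[OF assms(2)] .
    ultimately show "fps_X ^ (c * (k - 1)) dvd h ^ (k - Suc l) * g ^ l"
      unfolding e power_add by (rule mult_dvd_mono)
  qed
  ultimately show ?thesis using assms(1) by (simp add: power_add mult_dvd_mono)
qed



lemma card_ofnat0: "of_nat (card (UNIV :: 'a::{field,finite} set)) = (0::'a)"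
proof -
  have "(\<Sum>y\<in>(UNIV::'a set). 1 + y) = (\<Sum>y\<in>UNIV. y)"
    by (rule sum.reindex_bij_witness[of _ "\<lambda>y. y - 1" "\<lambda>y. y + 1"]) simp_all
  then show ?thesis by (simp add: sum.distrib)
qed

lemma CHAR_card:
  assumes "prime p" "card (UNIV :: 'a::{field,finite} set) = p"
  shows "CHAR('a) = p"
proof -
  have "CHAR('a) dvd p" using card_ofnat0[where 'a='a] assms(2) of_nat_eq_0_iff_char_dvd by metis
  moreover have "CHAR('a) \<noteq> 1" using CHAR_not_1 by simp
  ultimately show ?thesis using assms(1) unfolding prime_nat_iff by auto
qed

lemma fermat_card:
  fixes x :: "'a :: {field,finite}"
  shows   "x ^ card (UNIV :: 'a set) = x"
proof (cases "x = 0")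
  case False
  have "x * (\<Prod>y\<in>UNIV-{0}. x * y) = x * x ^ (card (UNIV :: 'a set) - 1) * \<Prod>(UNIV-{0})"
    by (simp add: prod.distrib mult_ac)
  also have "x * x ^ (card (UNIV :: 'a set) - 1) = x ^ Suc (card (UNIV :: 'a set) - 1)"
    by (subst power_Suc) auto
  also have "Suc (card (UNIV :: 'a set) - 1) = card (UNIV :: 'a set)"
    using finite_UNIV_card_ge_0[where ?'a = 'a] by simp
  also have "(\<Prod>y\<in>UNIV-{0}. x * y) = (\<Prod>y\<in>UNIV-{0}. y)"
    by (rule prod.reindex_bij_witness[of _ "\<lambda>y. y / x" "\<lambda>y. x * y"]) (use False in auto)
  finally show ?thesis
    by simp
qed (use finite_UNIV_card_ge_0[where ?'a = 'a] in auto)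

lemma frob_fps:
  assumes "prime p" "card (UNIV :: 'a::{field,finite} set) = p"
  shows "((f::'a fps) + g) ^ p = f ^ p + g ^ p"
proof -
  have c: "CHAR('a fps) = p" using CHAR_card[OF assms] semiring_char_fps by metis
  show ?thesis by (rule freshmans_dream) (use c assms(1) in auto)
qed

lemma ofnat_zero_iff:
  assumes "prime p" "card (UNIV :: 'a::{field,finite} set) = p"
  shows "(of_nat n = (0::'a)) \<longleftrightarrow> p dvd n"
  using CHAR_card[OF assms] of_nat_eq_0_iff_char_dvd by metis

lemma ofnat_mod:
  assumes "prime p" "card (UNIV :: 'a::{field,finite} set) = p"
  shows "(of_nat n :: 'a) = of_nat (n mod p)"
proof -
  have "n = n mod p + p * (n div p)" by simp
  then have "(of_nat n :: 'a) = of_nat (n mod p) + of_nat p * of_nat (n div p)"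
    by (metis of_nat_add of_nat_mult)
  then show ?thesis using ofnat_zero_iff[OF assms, of p] by simp
qed



lemma sucmod: "2 \<le> (p::nat) \<Longrightarrow> (p * x + 1) mod p = 1"
proof -
  assume "2 \<le> p"
  have "(1 + x * p) mod p = 1 mod p" by (rule mod_mult_self1)
  then show ?thesis using \<open>2 \<le> p\<close> by (simp add: mult.commute add.commute)
qed

lemma bound_aux:
  fixes p i j m :: nat
  assumes "2 \<le> p" "1 \<le> j" "j < i" "j \<le> m"
  shows "p * (p * j + i - 1) + 1 \<le> (p * i + 1) * p + p * (m - 1)"
proof -
  obtain d where i: "i = j + 1 + d" using less_imp_Suc_add[OF assms(3)] by auto
  have a: "p * (m - 1) \<ge> p * (j - 1)" using assms(4) by (simp add: diff_le_mono)
  obtain j' where j': "j = Suc j'" using assms(2) by (cases j) auto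
  have b: "p * (j - 1) + p = p * j" by (simp add: j')
  have pp: "p \<le> p * p" using assms(1) by simp
  have c: "p * d \<le> p * p * d" using mult_le_mono1[OF pp] by simp
  have d: "1 \<le> p * p" using pp assms(1) by linarith
  have l: "p * (p * j + i - 1) = p * p * j + p * j + p * d" by (simp add: i algebra_simps)
  have r: "(p * i + 1) * p = p * p * j + p * p + p * p * d + p" by (simp add: i algebra_simps)
  show ?thesis unfolding l using a b c d r by linarith
qed

theorem lemma5p2:
  fixes p i j :: nat and ui vpj :: "'a::{field,finite}" and u v :: "'a fps"
  assumes "prime p" and "card (UNIV :: 'a set) = p"
    and "1 \<le> j" and "j < i" and "coprime i p"
    and "u = fps_X + fps_const ui * fps_X ^ (p * i + 1)"
    and "v \<in> S_set p"
    and "\<forall>n. 2 \<le> n \<and> n < p * j \<longrightarrow> v $ n = 0"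
    and "v $ (p * j) = vpj"
    and "ui * vpj \<noteq> 0"
  shows "(\<forall>k. 2 \<le> k \<and> k < p * (p * j + i - 1) + 1 \<and> k mod p = 1 \<longrightarrow> fps_comm v u $ k = 0)
     \<and> fps_comm v u $ (p * (p * j + i - 1) + 1) \<noteq> 0
     \<and> fps_comm v u $ (p * (p * j + i - 1) + 1) = - (of_nat i * ui * vpj)"
proof -
  note pr = assms(1) and cardp = assms(2)
  have p2: "p \<ge> 2" using pr prime_ge_2_nat by blast
  have i2: "i \<ge> 2" using assms(3,4) by linarith
  have pj2: "p * j \<ge> 2" using mult_le_mono[OF p2 assms(3)] by simp
  have pi2: "p * i \<ge> 2" using mult_le_mono[OF p2, of 1 i] i2 by simp
  have cp: "of_nat p = (0::'a)" using ofnat_zero_iff[OF pr cardp, of p] by simp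
  have ferm: "\<And>x::'a. x ^ p = x" using fermat_card cardp by metis
  have frob: "\<And>f g :: 'a fps. (f + g) ^ p = f ^ p + g ^ p" using frob_fps[OF pr cardp] by blast
  have of1: "(of_nat n :: 'a) = 1" if "n mod p = 1" for n using ofnat_mod[OF pr cardp, of n] that by simp
  have v0: "v $ 0 = 0" "v $ 1 = 1" using assms(7) by (auto simp: S_set_def)
  have u0: "u $ 0 = 0" "u $ 1 = 1" using assms(6) pi2 by auto
  define f where "f = fps_inv v"
  define z where "z = fps_inv u"
  define y where "y = f oo z"
  have f0: "f $ 0 = 0" by (simp add: f_def fps_inv_def)
  have z0: "z $ 0 = 0" by (simp add: z_def fps_inv_def)
  have y0: "y $ 0 = 0" by (simp add: y_def f0)
  have vf: "v oo f = fps_X" unfolding f_def using v0 by (intro fps_inv_right) auto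
  have uz: "u oo z = fps_X" unfolding z_def using u0 by (intro fps_inv_right) auto
  have uy0: "(u oo y) $ 0 = 0" by (simp add: u0)
  have uf0: "(u oo f) $ 0 = 0" by (simp add: u0)
  have w: "fps_comm v u = v oo (u oo y)"
  proof -
    have "fps_comm v u = v oo u oo f oo z" by (simp add: fps_comm_def f_def z_def)
    also have "\<dots> = v oo (u oo f) oo z" by (simp add: fps_compose_assoc[OF f0 u0(1)])
    also have "\<dots> = v oo ((u oo f) oo z)" by (simp add: fps_compose_assoc[OF z0 uf0])
    also have "\<dots> = v oo (u oo y)" by (simp add: y_def fps_compose_assoc[OF z0 f0])
    finally show ?thesis .
  qed
  define D where "D = (fps_deriv :: 'a fps \<Rightarrow> 'a fps)"
  define W where "W = fps_comm v u"
  have dw: "D W = (D v oo (u oo y)) * ((D u oo y) * D y)"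
    unfolding D_def W_def w using fps_compose_deriv[OF uy0] fps_compose_deriv[OF y0] by simp
  have dy: "D y = (D f oo z) * D z"
    unfolding D_def y_def using fps_compose_deriv[OF z0] by simp
  have R1: "(D v oo f) * D f = 1"
    using arg_cong[of _ _ fps_deriv, OF vf] fps_compose_deriv[OF f0, of v] by (simp add: D_def)
  have R2: "(D u oo z) * D z = 1"
    using arg_cong[of _ _ fps_deriv, OF uz] fps_compose_deriv[OF z0, of u] by (simp add: D_def)
  have R1': "(D v oo y) * (D f oo z) = 1"
  proof -
    have "((D v oo f) * D f) oo z = 1" using R1 by simp
    then show ?thesis
      by (simp add: fps_compose_mult_distrib[OF z0] y_def fps_compose_assoc[OF z0 f0])
  qed
  define V where "V = D v oo y"
  define Vu where "Vu = D v oo (u oo y)"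
  define Uy where "Uy = D u oo y"
  define Uz where "Uz = D u oo z"
  have key: "D W * (V * Uz) = Vu * Uy"
  proof -
    have "D W * (V * Uz) = Vu * Uy * ((V * (D f oo z)) * (Uz * D z))"
      by (simp add: dw dy V_def Vu_def Uy_def Uz_def mult_ac)
    also have "\<dots> = Vu * Uy" using R1' R2 by (simp add: V_def Uz_def)
    finally show ?thesis .
  qed

  have Du: "D u = 1 + fps_const ui * fps_X ^ (p * i)"
  proof (rule fps_ext)
    fix n
    have pm: "(p * i + 1) mod p = 1" using sucmod[OF p2] .
    show "D u $ n = (1 + fps_const ui * fps_X ^ (p * i)) $ n"
      using pi2 of1[OF pm] by (auto simp: D_def assms(6))
  qed
  have Ucomp: "D u oo g = 1 + fps_const ui * g ^ (p * i)" if g0: "g $ 0 = 0" for g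
    by (simp add: Du fps_compose_add_distrib fps_compose_mult_distrib[OF g0]
          fps_compose_power[OF g0, symmetric] g0)
  have ucomp: "u oo g = g + fps_const ui * g ^ (p * i + 1)" if g0: "g $ 0 = 0" for g
    by (simp add: assms(6) fps_compose_add_distrib fps_compose_mult_distrib[OF g0]
          fps_compose_power[OF g0, symmetric] g0)

  define X where "X = (fps_X :: 'a fps)"
  define c where "c = fps_const vpj"
  define r where "r = v - X - c * X ^ (p * j)"
  have pjne: "p * j \<noteq> 0" "p * j \<noteq> Suc 0" using pj2 by linarith+
  have rdvd: "X ^ (p * j + 1) dvd r"
    unfolding Xdvd_iff X_def
  proof (intro allI impI)
    fix n assume n: "n < p * j + 1"
    consider "n = 0" | "n = 1" | "2 \<le> n \<and> n < p * j" | "n = p * j" using n by linarith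
    then show "r $ n = 0"
    proof cases
      case 1 then show ?thesis using pjne by (auto simp add: r_def v0 X_def c_def)
    next
      case 2
      have "v $ Suc 0 = 1" using v0(2) by simp
      then show ?thesis using 2 pjne by (auto simp add: r_def X_def c_def)
    next
      case 3 then show ?thesis using assms(8) by (simp add: r_def X_def c_def)
    next
      case 4 then show ?thesis using pj2 pjne assms(9) by (auto simp add: r_def X_def c_def)
    qed
  qed
  have vr: "v = X + c * X ^ (p * j) + r" by (simp add: r_def)
  have Xcomp: "X ^ k oo g = g ^ k" if g0: "g $ 0 = 0" for g k
    by (simp add: X_def fps_compose_power[OF g0, symmetric] g0)
  have Xo: "X oo g = g" if "g $ 0 = 0" for g by (simp add: X_def that)
  have vf': "f + c * f ^ (p * j) + (r oo f) = X"
    using vf unfolding vr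
    by (simp add: fps_compose_add_distrib fps_compose_mult_distrib[OF f0] Xcomp[OF f0] Xo[OF f0] c_def X_def[symmetric])
  have Xf: "X dvd f" using X_dvd0[OF f0] by (simp add: X_def)
  have Xf1: "X ^ 1 dvd f" using Xf by simp
  have fpj: "X ^ (p * j) dvd f ^ (p * j)" using Xf by (simp add: dvd_power_same)
  have rf: "X ^ (p * j + 1) dvd (r oo f)" using comp_dvd[OF rdvd[unfolded X_def] f0] by (simp add: X_def)
  have fX2: "X ^ 2 dvd (f - X)"
  proof -
    have e: "f - X = - (c * f ^ (p * j)) - (r oo f)" using vf' by (simp add: algebra_simps)
    have "X ^ 2 dvd c * f ^ (p * j)" using Xdvd_mono[OF fpj[unfolded X_def] pj2] by (simp add: X_def)
    have pj21: "2 \<le> p * j + 1" using pj2 by linarith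
    have "X ^ 2 dvd (r oo f)" using Xdvd_mono[OF rf[unfolded X_def] pj21] by (simp add: X_def)
    moreover note \<open>X ^ 2 dvd c * f ^ (p * j)\<close>
    ultimately show ?thesis unfolding e by (simp add: dvd_diff)
  qed
  have X1X: "X ^ 1 dvd X" by simp
  have pj1: "1 \<le> p * j" using pj2 by linarith
  have ex: "2 + 1 * (p * j - 1) = p * j + 1" using pj2 by linarith
  have fpow: "X ^ (p * j + 1) dvd (f ^ (p * j) - X ^ (p * j))"
    using pow_diff_dvd[OF fX2[unfolded X_def] Xf1[unfolded X_def] X1X[unfolded X_def] pj1]
    unfolding ex X_def .
  define F where "F = f - X + c * X ^ (p * j)"
  have Fdvd: "X ^ (p * j + 1) dvd F"
  proof -
    have e: "F = - (c * (f ^ (p * j) - X ^ (p * j))) - (r oo f)" using vf' by (simp add: F_def algebra_simps)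
    show ?thesis unfolding e using fpow rf by simp
  qed
  have Xz: "X ^ 1 dvd z" using X_dvd0[OF z0] by (simp add: X_def)
  have zX2: "X ^ 2 dvd (z - X)"
  proof -
    have "z + fps_const ui * z ^ (p * i + 1) = X" using uz ucomp[OF z0] by (simp add: X_def)
    then have e: "z - X = - (fps_const ui * z ^ (p * i + 1))" by (simp add: algebra_simps)
    have "X dvd z" using X_dvd0[OF z0] by (simp add: X_def)
    then have "X ^ (p * i + 1) dvd z ^ (p * i + 1)" by (rule dvd_power_same)
    moreover have pi21: "2 \<le> p * i + 1" using pi2 by linarith
    ultimately have "X ^ 2 dvd z ^ (p * i + 1)" using Xdvd_mono unfolding X_def by blast
    then show ?thesis unfolding e by simp
  qed
  have zpow: "X ^ (p * j + 1) dvd (z ^ (p * j) - X ^ (p * j))"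
    using pow_diff_dvd[OF zX2[unfolded X_def] Xz[unfolded X_def] X1X[unfolded X_def] pj1]
    unfolding ex X_def .
  define e where "e = y - z"
  define E where "E = e + c * X ^ (p * j)"
  have Edvd: "X ^ (p * j + 1) dvd E"
  proof -
    have "e = (f - X) oo z" by (simp add: e_def y_def fps_compose_sub_distrib X_def z0)
    also have "f - X = F - c * X ^ (p * j)" by (simp add: F_def)
    finally have "e = (F oo z) - c * z ^ (p * j)"
      by (simp add: fps_compose_sub_distrib fps_compose_mult_distrib[OF z0] Xcomp[OF z0] c_def)
    then have e2: "E = (F oo z) - c * (z ^ (p * j) - X ^ (p * j))" by (simp add: E_def algebra_simps)
    have "X ^ (p * j + 1) dvd (F oo z)" using comp_dvd[OF Fdvd[unfolded X_def] z0] by (simp add: X_def)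
    then show ?thesis unfolding e2 using zpow by simp
  qed
  have eE: "e = E - c * X ^ (p * j)" by (simp add: E_def)
  have ep: "e ^ p = E ^ p - c * X ^ (p * p * j)"
  proof -
    have m: "fps_const (- vpj) * X ^ (p * j) = - (c * X ^ (p * j))"
      unfolding c_def by (metis fps_const_neg mult_minus_left)
    have "e = E + fps_const (- vpj) * X ^ (p * j)" unfolding eE m by simp
    then have "e ^ p = E ^ p + (fps_const (- vpj) * X ^ (p * j)) ^ p"
      using frob[of E "fps_const (- vpj) * X ^ (p * j)"] by simp
    also have "(fps_const (- vpj) * X ^ (p * j)) ^ p = fps_const ((- vpj) ^ p) * X ^ (p * j * p)"
      by (simp add: power_mult_distrib power_mult)
    also have "(- vpj) ^ p = - vpj" by (rule ferm)
    finally have "e ^ p = E ^ p + fps_const (- vpj) * X ^ (p * p * j)" by (simp add: mult_ac)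
    moreover have "fps_const (- vpj) * X ^ (p * p * j) = - (c * X ^ (p * p * j))"
      unfolding c_def by (metis fps_const_neg mult_minus_left)
    ultimately show ?thesis by simp
  qed
  have EP: "X ^ ((p * j + 1) * p) dvd E ^ p" using lead_power(1)[OF Edvd[unfolded X_def]] by (simp add: X_def)
  have ep_dvd: "X ^ (p * p * j) dvd e ^ p"
  proof -
    have "X ^ (p * p * j) dvd E ^ p" using Xdvd_mono[OF EP[unfolded X_def], of "p*p*j"] by (simp add: X_def algebra_simps)
    then show ?thesis unfolding ep by (simp add: c_def)
  qed
  have ep_lead: "(e ^ p) $ (p * p * j) = - vpj"
  proof -
    have "(E ^ p) $ (p * p * j) = 0" using Xdvd_nth[OF EP[unfolded X_def], of "p*p*j"] p2
      by (simp add: X_def algebra_simps)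
    then show ?thesis unfolding ep by (simp add: c_def X_def)
  qed

  have z1: "z $ 1 = 1"
  proof -
    have "(z - X) $ 1 = 0" using Xdvd_nth[OF zX2[unfolded X_def], of 1] by (simp add: X_def)
    then show ?thesis by (simp add: X_def)
  qed
  have e1: "e $ 1 = 0"
  proof -
    have "1 < p * j + 1" using pj1 by linarith
    then have "E $ 1 = 0" using Xdvd_nth[OF Edvd[unfolded X_def]] by (simp add: X_def)
    then show ?thesis using pjne by (auto simp add: eE c_def X_def)
  qed
  have yze: "y = z + e" by (simp add: e_def)
  have y1: "y $ 1 = 1" using z1 e1 yze by simp
  have Xy: "X ^ 1 dvd y" using X_dvd0[OF y0] by (simp add: X_def)
  have yp: "y ^ p = z ^ p + e ^ p" using frob yze by simp
  define Sm where "Sm = (\<Sum>l<i. (z ^ p) ^ (i - Suc l) * (y ^ p) ^ l)"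
  have dp: "y ^ (p * i) - z ^ (p * i) = e ^ p * Sm"
  proof -
    have "y ^ (p * i) - z ^ (p * i) = (y ^ p) ^ i - (z ^ p) ^ i" by (simp add: power_mult)
    also have "\<dots> = (y ^ p - z ^ p) * Sm" unfolding Sm_def by (rule power_diff_sumr2)
    also have "y ^ p - z ^ p = e ^ p" using yp by simp
    finally show ?thesis .
  qed
  have T: "X ^ (p * (i - 1)) dvd (z ^ p) ^ (i - Suc l) * (y ^ p) ^ l \<and>
      ((z ^ p) ^ (i - Suc l) * (y ^ p) ^ l) $ (p * (i - 1)) = 1" if "l < i" for l
  proof -
    have "i - 1 = (i - Suc l) + l" using that by auto
    then have ex: "p * (i - 1) = p * (i - Suc l) + p * l" by (metis add_mult_distrib2)
    note A = lead_power[OF Xz[unfolded X_def], of "p * (i - Suc l)", unfolded mult_1]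
    note B = lead_power[OF Xy[unfolded X_def], of "p * l", unfolded mult_1]
    show ?thesis unfolding ex X_def power_mult[symmetric]
      using lead_mult[OF A(1) B(1)] A(2) B(2) z1 y1 by simp
  qed
  have Sm_dvd: "X ^ (p * (i - 1)) dvd Sm" unfolding Sm_def
    by (rule dvd_sum) (use T in auto)
  have Sm_lead: "Sm $ (p * (i - 1)) = of_nat i"
  proof -
    have "Sm $ (p * (i - 1)) = (\<Sum>l<i. (1::'a))" unfolding Sm_def fps_sum_nth
      by (rule sum.cong) (use T in auto)
    then show ?thesis by simp
  qed
  define N1 where "N1 = p * (p * j + i - 1)"
  have N1e: "N1 = p * p * j + p * (i - 1)"
  proof -
    have "p * j + i - 1 = p * j + (i - 1)" using i2 by linarith
    then show ?thesis unfolding N1_def by (simp add: add_mult_distrib2)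
  qed
  have dif_dvd: "X ^ N1 dvd (y ^ (p * i) - z ^ (p * i))"
    and dif_lead: "(y ^ (p * i) - z ^ (p * i)) $ N1 = - vpj * of_nat i"
    using lead_mult[OF ep_dvd[unfolded X_def] Sm_dvd[unfolded X_def]] ep_lead Sm_lead
    unfolding dp N1e X_def by simp_all
  have DvP: "D v $ m = 0 \<or> m = 0 \<or> (\<exists>m'. m = p * m' \<and> j \<le> m')" for m
  proof (cases "D v $ m = 0 \<or> m = 0")
    case True then show ?thesis by blast
  next
    case False
    then have nz: "of_nat (m + 1) * v $ (m + 1) \<noteq> (0::'a)" and m0: "m \<noteq> 0" by (auto simp: D_def)
    from nz have ndvd: "\<not> p dvd (m + 1)" using ofnat_zero_iff[OF pr cardp, of "m+1"] by auto
    from nz have vnz: "v $ (m + 1) \<noteq> 0" by auto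
    have m2: "2 \<le> m + 1" using m0 by linarith
    have "(m + 1) mod p \<noteq> 0" using ndvd by (simp add: dvd_eq_mod_eq_0)
    moreover have "\<forall>n\<ge>2. n mod p \<noteq> 0 \<and> n mod p \<noteq> 1 \<longrightarrow> v $ n = 0"
      using assms(7) by (simp add: S_set_def)
    ultimately have mod1: "(m + 1) mod p = 1" using vnz m2 by blast
    then have "m mod p = 0" using p2 by (simp add: mod_Suc split: if_splits)
    moreover have "p * (m div p) + m mod p = m" by (rule mult_div_mod_eq)
    ultimately have pm: "m = p * (m div p)" by simp
    have "\<not> m + 1 < p * j" using assms(8) vnz m2 by auto
    moreover have "m + 1 \<noteq> p * j" using ndvd by auto
    ultimately have "p * j \<le> m" by linarith
    then have "p * j \<le> p * (m div p)" using pm by simp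
    then have "j \<le> m div p" using p2 by simp
    then show ?thesis using pm by blast
  qed
  have Vdiff: "X ^ (N1 + 1) dvd (Vu - V)"
    unfolding X_def Xdvd_iff
  proof (intro allI impI)
    fix n assume n: "n < N1 + 1"
    define g where "g = u oo y"
    have g0: "g $ 0 = 0" by (simp add: g_def u0)
    have "(Vu - V) $ n = (\<Sum>m=0..n. D v $ m * ((g ^ m) $ n - (y ^ m) $ n))"
      by (simp add: Vu_def V_def g_def fps_compose_nth sum_subtractf right_diff_distrib)
    also have "\<dots> = 0"
    proof (rule sum.neutral, rule ballI)
      fix m assume "m \<in> {0..n}"
      consider "D v $ m = 0" | "m = 0" | m' where "m = p * m'" "j \<le> m'" using DvP[of m] by blast
      then show "D v $ m * ((g ^ m) $ n - (y ^ m) $ n) = 0"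
      proof cases
        case 3
        define d where "d = fps_const ui * y ^ (p * i + 1)"
        have gd: "g = y + d" by (simp add: g_def d_def ucomp[OF y0])
        have "X dvd y" using Xy by simp
        then have "X ^ (p * i + 1) dvd y ^ (p * i + 1)" by (rule dvd_power_same)
        then have dd: "fps_X ^ (p * i + 1) dvd d" by (simp add: d_def X_def)
        have dp': "fps_X ^ ((p * i + 1) * p) dvd g ^ p - y ^ p"
          using lead_power(1)[OF dd, of p] frob gd by simp
        have Xg: "fps_X ^ 1 dvd g" using X_dvd0[OF g0] by simp
        have A: "fps_X ^ p dvd g ^ p" using lead_power(1)[OF Xg, of p] by simp
        have B: "fps_X ^ p dvd y ^ p" using lead_power(1)[OF Xy[unfolded X_def], of p] by simp
        have m1: "1 \<le> m'" using 3(2) assms(3) by linarith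
        have big: "fps_X ^ ((p * i + 1) * p + p * (m' - 1)) dvd (g ^ p) ^ m' - (y ^ p) ^ m'"
          by (rule pow_diff_dvd[OF dp' A B m1])
        have bd: "N1 + 1 \<le> (p * i + 1) * p + p * (m' - 1)"
          unfolding N1_def using bound_aux[OF p2 assms(3) assms(4) 3(2)] .
        have "n < (p * i + 1) * p + p * (m' - 1)" using bd n by linarith
        then have "((g ^ p) ^ m' - (y ^ p) ^ m') $ n = 0" by (rule Xdvd_nth[OF big])
        then show ?thesis using 3(1) by (simp add: power_mult)
      qed auto
    qed
    finally show "(Vu - V) $ n = 0" .
  qed

  have Uye: "Uy = 1 + fps_const ui * y ^ (p * i)" unfolding Uy_def by (rule Ucomp[OF y0])
  have Uze: "Uz = 1 + fps_const ui * z ^ (p * i)" unfolding Uz_def by (rule Ucomp[OF z0])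
  have V0: "V $ 0 = 1" using v0 by (simp add: V_def D_def)
  have zpi0: "(z ^ (p * i)) $ 0 = 0"
  proof -
    have "X dvd z" using Xz by simp
    then have "X ^ (p * i) dvd z ^ (p * i)" by (rule dvd_power_same)
    moreover have "0 < p * i" using pi2 by linarith
    ultimately show ?thesis using Xdvd_nth unfolding X_def by blast
  qed
  have Uz0: "Uz $ 0 = 1" using zpi0 by (simp add: Uze)
  define T where "T = Vu * Uy - V * Uz"
  have Te: "T = (Vu - V) * Uy + V * (fps_const ui * (y ^ (p * i) - z ^ (p * i)))"
    by (simp add: T_def Uye Uze algebra_simps)
  have p1dvd: "X ^ (N1 + 1) dvd (Vu - V) * Uy" using Vdiff by simp
  have p1N: "((Vu - V) * Uy) $ N1 = 0" using Xdvd_nth[OF p1dvd[unfolded X_def], of N1] by simp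
  have p1dvd': "X ^ N1 dvd (Vu - V) * Uy" using Xdvd_mono[OF p1dvd[unfolded X_def], of N1] by (simp add: X_def)
  have X0V: "fps_X ^ 0 dvd V" by simp
  have cdif: "fps_X ^ N1 dvd fps_const ui * (y ^ (p * i) - z ^ (p * i))"
    using dif_dvd by (simp add: X_def)
  note p2l = lead_mult[OF X0V cdif]
  have T_dvd: "fps_X ^ N1 dvd T" unfolding Te using p1dvd'[unfolded X_def] p2l(1) by simp
  have T_lead: "T $ N1 = - (of_nat i * ui * vpj)"
  proof -
    have "T $ N1 = ((Vu - V) * Uy) $ N1 + (V * (fps_const ui * (y ^ (p * i) - z ^ (p * i)))) $ N1"
      unfolding Te by (simp only: fps_add_nth)
    also have "(V * (fps_const ui * (y ^ (p * i) - z ^ (p * i)))) $ N1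
        = V $ 0 * (fps_const ui * (y ^ (p * i) - z ^ (p * i))) $ N1"
      using p2l(2) by simp
    also have "(fps_const ui * (y ^ (p * i) - z ^ (p * i))) $ N1 = ui * (- vpj * of_nat i)"
      by (simp only: fps_mult_left_const_nth dif_lead)
    finally have t: "T $ N1 = ((Vu - V) * Uy) $ N1 + V $ 0 * (ui * (- vpj * of_nat i))" .
    have "T $ N1 = ui * (- vpj * of_nat i)" unfolding t by (simp only: p1N V0 add_0_left mult_1_left)
    then show ?thesis by (simp add: algebra_simps)
  qed
  define P where "P = V * Uz"
  have P0: "P $ 0 = 1" using V0 Uz0 by (simp add: P_def)
  have kP: "(D W - 1) * P = T"
  proof -
    have "(D W - 1) * P = D W * P - P" by (simp add: algebra_simps)
    then show ?thesis using key by (simp add: P_def T_def)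
  qed
  have DW1: "D W - 1 = T * inverse P"
  proof -
    have "D W - 1 = (D W - 1) * (P * inverse P)" using inverse_mult_eq_1'[of P] P0 by simp
    also have "\<dots> = T * inverse P" using kP by (simp add: mult.assoc[symmetric])
    finally show ?thesis .
  qed
  have X0I: "fps_X ^ 0 dvd inverse P" by simp
  note fin = lead_mult[OF T_dvd X0I]
  have DW_dvd: "fps_X ^ N1 dvd (D W - 1)" using fin(1) DW1 by simp
  have DW_lead: "(D W - 1) $ N1 = - (of_nat i * ui * vpj)" using fin(2) DW1 T_lead P0 by simp
  have Wk: "W $ k = (D W - 1) $ (k - 1)" if "2 \<le> k" "k mod p = 1" for k
  proof -
    define n where "n = k - 1"
    have k: "k = Suc n" and n0: "n \<noteq> 0" unfolding n_def using that(1) by arith+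
    have "(D W - 1) $ (k - 1) = D W $ n" using n0 by (simp add: k)
    also have "\<dots> = of_nat k * W $ k" by (simp add: D_def k)
    also have "of_nat k = (1::'a)" using of1 that(2) by blast
    finally show ?thesis by simp
  qed
  have N1mod: "(N1 + 1) mod p = 1" unfolding N1_def using sucmod[OF p2] .
  have a: "p * j \<le> p * (p * j)" using p2 by simp
  have N12: "2 \<le> N1 + 1" unfolding N1e mult.assoc using a pj2 by linarith
  have ni: "(of_nat i :: 'a) \<noteq> 0"
  proof
    assume "(of_nat i :: 'a) = 0"
    then have "p dvd i" using ofnat_zero_iff[OF pr cardp] by blast
    then have "p = 1" by (rule coprime_common_divisor_nat[OF assms(5) _ dvd_refl])
    then show False using p2 by simp
  qed
  have res: "W $ (N1 + 1) = - (of_nat i * ui * vpj)" using Wk[OF N12 N1mod] DW_lead by simp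
  have part1: "\<forall>k. 2 \<le> k \<and> k < N1 + 1 \<and> k mod p = 1 \<longrightarrow> W $ k = 0"
  proof (intro allI impI)
    fix k assume k: "2 \<le> k \<and> k < N1 + 1 \<and> k mod p = 1"
    then have "k - 1 < N1" by linarith
    then have "(D W - 1) $ (k - 1) = 0" by (rule Xdvd_nth[OF DW_dvd])
    then show "W $ k = 0" using Wk k by simp
  qed
  have nz: "W $ (N1 + 1) \<noteq> 0" using res ni assms(10) by simp
  have goal: "(\<forall>k. 2 \<le> k \<and> k < N1 + 1 \<and> k mod p = 1 \<longrightarrow> W $ k = 0)
     \<and> W $ (N1 + 1) \<noteq> 0 \<and> W $ (N1 + 1) = - (of_nat i * ui * vpj)"
    using part1 nz res by (intro conjI)
  then show ?thesis unfolding W_def N1_def .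
qed


end
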